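(* The logarithmic partial negativity $\hat N_l(\rho)=\log_2[\hat N(\rho)+1]$ is not monogamous: for the state $|\widetilde\Omega\rangle^{ABC}=\lambda_0|0\rangle|00\rangle+\lambda_1|1\rangle|10\rangle+\lambda_2|2\rangle|11\rangle$ with $\lambda_0\ge\lambda_1\ge\lambda_2>0$, $\sum\lambda_i^2=1$, one has $\hat N_l(|\widetilde\Omega\rangle^{A|BC})=\hat N_l(\rho^{AB})=\log_2(1+\lambda_0\lambda_1)$ while $\hat N_l(\rho^{AC})=\log_2(1+\lambda_1\lambda_2)>0$.
   Context: $\hat N(\rho)$ is the operator norm of the negative part of the partial transpose $\rho^{T_A}$ (the absolute value of its most negative eigenvalue, or $0$ if $\rho^{T_A}\ge0$). For a tripartite state, $E(A|BC)$ is the measure across the cut $A$ versus $BC$; $\rho^{AB},\rho^{AC}$ are reduced states. A measure $E$ is monogamous if $E(A|BC)=E(AB)$ always implies $E(AC)=0$. *)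

theory Defs
  imports Complex_Main "Jordan_Normal_Form.Matrix" "Jordan_Normal_Form.Char_Poly"
begin

text \<open>A bipartite system
  of dimensions dA, dX uses the product basis index a * dX + x;
  a tripartite system of dimensions dA, dB, dC uses a * (dB * dC) + b * dC + c.\<close>

definition density_matrix :: "nat \<Rightarrow> complex mat \<Rightarrow> bool" where
  "density_matrix n \<rho> \<longleftrightarrow>
     \<rho> \<in> carrier_mat n n \<and>
     (\<forall>i<n. \<forall>j<n. \<rho> $$ (j, i) = cnj (\<rho> $$ (i, j))) \<and>
     (\<forall>v \<in> carrier_vec n. 0 \<le> Re (\<Sum>i<n. \<Sum>j<n. cnj (v $ i) * \<rho> $$ (i, j) * v $ j)) \<and>
     (\<Sum>i<n. \<rho> $$ (i, i)) = 1"

definition partial_transpose_A :: "nat \<Rightarrow> nat \<Rightarrow> complex mat \<Rightarrow> complex mat" where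
  "partial_transpose_A dA dX \<rho> =
     mat (dA * dX) (dA * dX)
       (\<lambda>(i, j). \<rho> $$ ((j div dX) * dX + i mod dX, (i div dX) * dX + j mod dX))"

text \<open>Operator norm of the negative part of a Hermitian matrix: absolute value of its
  most negative eigenvalue, or 0 if there is none.\<close>
definition neg_part_norm :: "complex mat \<Rightarrow> real" where
  "neg_part_norm M = Max ({0} \<union> {- x | x. eigenvalue M (complex_of_real x)})"

definition partial_negativity :: "nat \<Rightarrow> nat \<Rightarrow> complex mat \<Rightarrow> real" where
  "partial_negativity dA dX \<rho> = neg_part_norm (partial_transpose_A dA dX \<rho>)"

definition log_partial_negativity :: "nat \<Rightarrow> nat \<Rightarrow> complex mat \<Rightarrow> real" where
  "log_partial_negativity dA dX \<rho> = log 2 (partial_negativity dA dX \<rho> + 1)"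

definition reduce_AB :: "nat \<Rightarrow> nat \<Rightarrow> nat \<Rightarrow> complex mat \<Rightarrow> complex mat" where
  "reduce_AB dA dB dC \<rho> = mat (dA * dB) (dA * dB)
     (\<lambda>(i, j). \<Sum>c<dC. \<rho> $$ ((i div dB) * (dB * dC) + (i mod dB) * dC + c,
                                (j div dB) * (dB * dC) + (j mod dB) * dC + c))"

definition reduce_AC :: "nat \<Rightarrow> nat \<Rightarrow> nat \<Rightarrow> complex mat \<Rightarrow> complex mat" where
  "reduce_AC dA dB dC \<rho> = mat (dA * dC) (dA * dC)
     (\<lambda>(i, j). \<Sum>b<dB. \<rho> $$ ((i div dC) * (dB * dC) + b * dC + i mod dC,
                                (j div dC) * (dB * dC) + b * dC + j mod dC))"

definition monogamous :: "(nat \<Rightarrow> nat \<Rightarrow> complex mat \<Rightarrow> real) \<Rightarrow> bool" where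
  "monogamous E \<longleftrightarrow>
     (\<forall>dA dB dC \<rho>. density_matrix (dA * dB * dC) \<rho> \<longrightarrow>
        E dA (dB * dC) \<rho> = E dA dB (reduce_AB dA dB dC \<rho>) \<longrightarrow>
        E dA dC (reduce_AC dA dB dC \<rho>) = 0)"

definition pure_state :: "complex vec \<Rightarrow> complex mat" where
  "pure_state v = mat (dim_vec v) (dim_vec v) (\<lambda>(i, j). v $ i * cnj (v $ j))"

text \<open>The state l0|0>|00> + l1|1>|10> + l2|2>|11> with A a qutrit, B and C qubits:
  basis indices 0, 1*4+1*2+0 = 6, 2*4+1*2+1 = 11.\<close>
definition Omega_tilde :: "real \<Rightarrow> real \<Rightarrow> real \<Rightarrow> complex vec" where
  "Omega_tilde l0 l1 l2 = vec 12 (\<lambda>k. if k = 0 then complex_of_real l0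
                                     else if k = 6 then complex_of_real l1
                                     else if k = 11 then complex_of_real l2 else 0)"

end

theory Submission imports Defs begin

lemma comp: "A *\<^sub>v v = c \<cdot>\<^sub>v w \<Longrightarrow> r < dim_row A \<Longrightarrow> r < dim_vec w \<Longrightarrow> row A r \<bullet> v = c * w$r"
  by (metis index_mult_mat_vec index_smult_vec(1))

lemma sum12: "sum g {0..<12::nat} = g 0 + g 1 + g 2 + g 3 + g 4 + g 5 + g 6 + g 7 + g 8 + g 9 + g 10 + g 11"
  by (simp add: eval_nat_numeral atLeast0LessThan lessThan_Suc add.commute add.left_commute)
lemma sum6: "sum g {0..<6::nat} = g 0 + g 1 + g 2 + g 3 + g 4 + g 5"
  by (simp add: eval_nat_numeral atLeast0LessThan lessThan_Suc add.commute add.left_commute)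
lemma sum2: "sum g {..<2::nat} = g 0 + g 1"
  by (simp add: eval_nat_numeral lessThan_Suc add.commute)
lemma all12: "(\<forall>r<12::nat. P r) \<longleftrightarrow> P 0 \<and> P 1 \<and> P 2 \<and> P 3 \<and> P 4 \<and> P 5 \<and> P 6 \<and> P 7 \<and> P 8 \<and> P 9 \<and> P 10 \<and> P 11"
  by (simp add: eval_nat_numeral less_Suc_eq all_conj_distrib)
lemma all6: "(\<forall>r<6::nat. P r) \<longleftrightarrow> P 0 \<and> P 1 \<and> P 2 \<and> P 3 \<and> P 4 \<and> P 5"
  by (simp add: eval_nat_numeral less_Suc_eq all_conj_distrib)

lemma pair0:
  fixes a b :: complex and x d :: real
  assumes "of_real d * a = of_real x * b" "of_real d * b = of_real x * a" "0 \<le> d" "x < -d"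
  shows "a = 0 \<and> b = 0"
proof -
  have "of_real x * (of_real x * a) = of_real d * (of_real d * a)"
    using assms(1,2) by (metis mult.left_commute)
  hence "complex_of_real (x*x - d*d) * a = 0" by (simp add: algebra_simps)
  moreover have "x*x - d*d \<noteq> 0"
  proof -
    have "d * d \<le> d * (-x)" using assms(3,4) by (intro mult_left_mono) auto
    moreover have "d * (-x) < (-x) * (-x)" using assms(3,4) by (intro mult_strict_right_mono) auto
    ultimately show ?thesis by simp
  qed
  ultimately have a: "a = 0" by (metis mult_eq_0_iff of_real_eq_0_iff)
  moreover have "b = 0" using assms(1,3,4) a by simp
  ultimately show ?thesis by simp
qed

lemma diag0:
  fixes a :: complex and x d :: real
  assumes "of_real x * a = of_real (d*d) * a" "x < 0"
  shows "a = 0"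
proof -
  have "complex_of_real (x - d*d) * a = 0" using assms(1) by (simp add: algebra_simps)
  moreover have "x - d*d \<noteq> 0" using assms(2) zero_le_square[of d] by linarith
  ultimately show ?thesis by (metis mult_eq_0_iff of_real_eq_0_iff)
qed

lemma zero0:
  fixes a :: complex and x :: real
  assumes "of_real x * a = 0" "x < 0"
  shows "a = 0"
  using assms by simp

lemma PT34_low:
  fixes l0 l1 l2 :: real and v :: "complex vec"
  assumes v: "v \<in> carrier_vec 12"
    and e: "partial_transpose_A 3 4 (pure_state (Omega_tilde l0 l1 l2)) *\<^sub>v v = complex_of_real x \<cdot>\<^sub>v v"
    and l: "l0 \<ge> l1" "l1 \<ge> l2" "l2 > 0" and x: "x < - (l0*l1)"
  shows "v = 0\<^sub>v 12"
proof -
  have R: "\<And>r. r < 12 \<Longrightarrow> row (partial_transpose_A 3 4 (pure_state (Omega_tilde l0 l1 l2))) r \<bullet> v = x * v$r"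
    by (rule comp[OF e]) (use assms in \<open>auto simp: partial_transpose_A_def\<close>)
  note S = scalar_prod_def sum12 partial_transpose_A_def pure_state_def Omega_tilde_def
  have p01: "0 < l0*l1" using l by simp
  have x0: "x < 0" using p01 x by linarith
  have q1: "l0*l2 \<le> l0*l1" using l by (intro mult_left_mono) auto
  have q2: "l1*l2 \<le> l0*l2" using l by (intro mult_right_mono) auto
  have c1: "0 \<le> l0*l2" "x < -(l0*l2)" "0 \<le> l1*l2" "x < -(l1*l2)" "0 \<le> l0*l1"
    using l by simp_all (use x q1 q2 in linarith)+
  have "of_real x * v$0 = of_real (l0*l0) * v$0" using R[of 0] v by (simp add: S; metis)
  hence z0: "v$0 = 0" using diag0 x0 by blast
  have "of_real x * v$6 = of_real (l1*l1) * v$6" using R[of 6] v by (simp add: S; metis)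
  hence z6: "v$6 = 0" using diag0 x0 by blast
  have "of_real x * v$11 = of_real (l2*l2) * v$11" using R[of 11] v by (simp add: S; metis)
  hence z11: "v$11 = 0" using diag0 x0 by blast
  have "of_real x * v$1 = 0" using R[of 1] v by (simp add: S)
  hence z1: "v$1 = 0" using zero0 x0 by blast
  have "of_real x * v$5 = 0" using R[of 5] v by (simp add: S)
  hence z5: "v$5 = 0" using zero0 x0 by blast
  have "of_real x * v$9 = 0" using R[of 9] v by (simp add: S)
  hence z9: "v$9 = 0" using zero0 x0 by blast
  have "of_real (l0*l1) * v$2 = of_real x * v$4" using R[of 4] v by (simp add: S mult.commute)
  moreover have "of_real (l0*l1) * v$4 = of_real x * v$2" using R[of 2] v by (simp add: S mult.commute)
  ultimately have z24: "v$2 = 0 \<and> v$4 = 0" using pair0 c1 x by blast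
  have "of_real (l0*l2) * v$3 = of_real x * v$8" using R[of 8] v by (simp add: S mult.commute)
  moreover have "of_real (l0*l2) * v$8 = of_real x * v$3" using R[of 3] v by (simp add: S mult.commute)
  ultimately have z38: "v$3 = 0 \<and> v$8 = 0" using pair0 c1 by blast
  have "of_real (l1*l2) * v$7 = of_real x * v$10" using R[of 10] v by (simp add: S mult.commute)
  moreover have "of_real (l1*l2) * v$10 = of_real x * v$7" using R[of 7] v by (simp add: S mult.commute)
  ultimately have z710: "v$7 = 0 \<and> v$10 = 0" using pair0 c1 by blast
  show ?thesis
  proof (rule eq_vecI)
    show "dim_vec v = dim_vec (0\<^sub>v 12)" using v by simp
    have "\<forall>i<12. v $ i = 0\<^sub>v 12 $ i"
      unfolding all12 using z0 z1 z24 z38 z5 z6 z710 z9 z11 by simp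
    then show "\<And>i. i < dim_vec (0\<^sub>v 12) \<Longrightarrow> v $ i = 0\<^sub>v 12 $ i" by simp
  qed
qed

lemma AB_low:
  fixes l0 l1 l2 :: real and v :: "complex vec"
  assumes v: "v \<in> carrier_vec 6"
    and e: "partial_transpose_A 3 2 (reduce_AB 3 2 2 (pure_state (Omega_tilde l0 l1 l2))) *\<^sub>v v = complex_of_real x \<cdot>\<^sub>v v"
    and l: "l0 \<ge> l1" "l1 \<ge> l2" "l2 > 0" and x: "x < - (l0*l1)"
  shows "v = 0\<^sub>v 6"
proof -
  have R: "\<And>r. r < 6 \<Longrightarrow> row (partial_transpose_A 3 2 (reduce_AB 3 2 2 (pure_state (Omega_tilde l0 l1 l2)))) r \<bullet> v = x * v$r"
    by (rule comp[OF e]) (use assms in \<open>auto simp: partial_transpose_A_def\<close>)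
  note S = scalar_prod_def sum6 sum2 partial_transpose_A_def reduce_AB_def pure_state_def Omega_tilde_def
  have p01: "0 < l0*l1" using l by simp
  have x0: "x < 0" using p01 x by linarith
  have "of_real x * v$0 = of_real (l0*l0) * v$0" using R[of 0] v by (simp add: S; metis)
  hence z0: "v$0 = 0" using diag0 x0 by blast
  have "of_real x * v$3 = of_real (l1*l1) * v$3" using R[of 3] v by (simp add: S; metis)
  hence z3: "v$3 = 0" using diag0 x0 by blast
  have "of_real x * v$5 = of_real (l2*l2) * v$5" using R[of 5] v by (simp add: S; metis)
  hence z5: "v$5 = 0" using diag0 x0 by blast
  have "of_real x * v$4 = 0" using R[of 4] v by (simp add: S)
  hence z4: "v$4 = 0" using zero0 x0 by blast
  have "of_real (l0*l1) * v$2 = of_real x * v$1" using R[of 1] v by (simp add: S mult.commute)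
  moreover have "of_real (l0*l1) * v$1 = of_real x * v$2" using R[of 2] v by (simp add: S mult.commute)
  ultimately have z12: "v$1 = 0 \<and> v$2 = 0" using pair0[of "l0*l1"] p01 x by (metis less_eq_real_def)
  show ?thesis
  proof (rule eq_vecI)
    show "dim_vec v = dim_vec (0\<^sub>v 6)" using v by simp
    have "\<forall>i<6. v $ i = 0\<^sub>v 6 $ i"
      unfolding all6 using z0 z12 z3 z4 z5 by simp
    then show "\<And>i. i < dim_vec (0\<^sub>v 6) \<Longrightarrow> v $ i = 0\<^sub>v 6 $ i" by simp
  qed
qed

lemma AC_low:
  fixes l0 l1 l2 :: real and v :: "complex vec"
  assumes v: "v \<in> carrier_vec 6"
    and e: "partial_transpose_A 3 2 (reduce_AC 3 2 2 (pure_state (Omega_tilde l0 l1 l2))) *\<^sub>v v = complex_of_real x \<cdot>\<^sub>v v"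
    and l: "l0 \<ge> l1" "l1 \<ge> l2" "l2 > 0" and x: "x < - (l1*l2)"
  shows "v = 0\<^sub>v 6"
proof -
  have R: "\<And>r. r < 6 \<Longrightarrow> row (partial_transpose_A 3 2 (reduce_AC 3 2 2 (pure_state (Omega_tilde l0 l1 l2)))) r \<bullet> v = x * v$r"
    by (rule comp[OF e]) (use assms in \<open>auto simp: partial_transpose_A_def\<close>)
  note S = scalar_prod_def sum6 sum2 partial_transpose_A_def reduce_AC_def pure_state_def Omega_tilde_def
  have p01: "0 < l1*l2" using l by simp
  have x0: "x < 0" using p01 x by linarith
  have "of_real x * v$0 = of_real (l0*l0) * v$0" using R[of 0] v by (simp add: S; metis)
  hence z0: "v$0 = 0" using diag0 x0 by blast
  have "of_real x * v$2 = of_real (l1*l1) * v$2" using R[of 2] v by (simp add: S; metis)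
  hence z2: "v$2 = 0" using diag0 x0 by blast
  have "of_real x * v$5 = of_real (l2*l2) * v$5" using R[of 5] v by (simp add: S; metis)
  hence z5: "v$5 = 0" using diag0 x0 by blast
  have "of_real x * v$1 = 0" using R[of 1] v by (simp add: S)
  hence z1: "v$1 = 0" using zero0 x0 by blast
  have "of_real (l1*l2) * v$4 = of_real x * v$3" using R[of 3] v by (simp add: S mult.commute)
  moreover have "of_real (l1*l2) * v$3 = of_real x * v$4" using R[of 4] v by (simp add: S mult.commute)
  ultimately have z34: "v$3 = 0 \<and> v$4 = 0" using pair0[of "l1*l2"] p01 x by (metis less_eq_real_def)
  show ?thesis
  proof (rule eq_vecI)
    show "dim_vec v = dim_vec (0\<^sub>v 6)" using v by simp
    have "\<forall>i<6. v $ i = 0\<^sub>v 6 $ i"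
      unfolding all6 using z0 z1 z2 z34 z5 by simp
    then show "\<And>i. i < dim_vec (0\<^sub>v 6) \<Longrightarrow> v $ i = 0\<^sub>v 6 $ i" by simp
  qed
qed

lemma PT34_ev:
  "eigenvalue (partial_transpose_A 3 4 (pure_state (Omega_tilde l0 l1 l2))) (complex_of_real (-(l0*l1)))"
proof -
  let ?M = "partial_transpose_A 3 4 (pure_state (Omega_tilde l0 l1 l2))"
  define v :: "complex vec" where "v = vec 12 (\<lambda>k. if k = 2 then -1 else if k = 4 then 1 else 0)"
  note S = scalar_prod_def sum12 partial_transpose_A_def pure_state_def Omega_tilde_def v_def
  have "\<forall>i<12. (?M *\<^sub>v v) $ i = (complex_of_real (-(l0*l1)) \<cdot>\<^sub>v v) $ i"
    unfolding all12 by (simp add: S)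
  hence "?M *\<^sub>v v = complex_of_real (-(l0*l1)) \<cdot>\<^sub>v v"
    by (intro eq_vecI) (auto simp: v_def partial_transpose_A_def)
  moreover have "v \<noteq> 0\<^sub>v 12"
  proof
    assume "v = 0\<^sub>v 12"
    hence "v $ 4 = 0\<^sub>v 12 $ 4" by simp
    thus False by (simp add: v_def)
  qed
  ultimately show ?thesis unfolding eigenvalue_def eigenvector_def
    by (intro exI[of _ v]) (auto simp: v_def partial_transpose_A_def)
qed

lemma AB_ev:
  "eigenvalue (partial_transpose_A 3 2 (reduce_AB 3 2 2 (pure_state (Omega_tilde l0 l1 l2)))) (complex_of_real (-(l0*l1)))"
proof -
  let ?M = "partial_transpose_A 3 2 (reduce_AB 3 2 2 (pure_state (Omega_tilde l0 l1 l2)))"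
  define v :: "complex vec" where "v = vec 6 (\<lambda>k. if k = 2 then -1 else if k = 1 then 1 else 0)"
  note S = scalar_prod_def sum6 sum2 reduce_AB_def partial_transpose_A_def pure_state_def Omega_tilde_def v_def
  have "\<forall>i<6. (?M *\<^sub>v v) $ i = (complex_of_real (-(l0*l1)) \<cdot>\<^sub>v v) $ i"
    unfolding all6 by (simp add: S)
  hence "?M *\<^sub>v v = complex_of_real (-(l0*l1)) \<cdot>\<^sub>v v"
    by (intro eq_vecI) (auto simp: v_def partial_transpose_A_def)
  moreover have "v \<noteq> 0\<^sub>v 6"
  proof
    assume "v = 0\<^sub>v 6"
    hence "v $ 1 = 0\<^sub>v 6 $ 4" by simp
    thus False by (simp add: v_def)
  qed
  ultimately show ?thesis unfolding eigenvalue_def eigenvector_def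
    by (intro exI[of _ v]) (auto simp: v_def partial_transpose_A_def)
qed

lemma AC_ev:
  "eigenvalue (partial_transpose_A 3 2 (reduce_AC 3 2 2 (pure_state (Omega_tilde l0 l1 l2)))) (complex_of_real (-(l1*l2)))"
proof -
  let ?M = "partial_transpose_A 3 2 (reduce_AC 3 2 2 (pure_state (Omega_tilde l0 l1 l2)))"
  define v :: "complex vec" where "v = vec 6 (\<lambda>k. if k = 4 then -1 else if k = 3 then 1 else 0)"
  note S = scalar_prod_def sum6 sum2 reduce_AC_def partial_transpose_A_def pure_state_def Omega_tilde_def v_def
  have "\<forall>i<6. (?M *\<^sub>v v) $ i = (complex_of_real (-(l1*l2)) \<cdot>\<^sub>v v) $ i"
    unfolding all6 by (simp add: S)
  hence "?M *\<^sub>v v = complex_of_real (-(l1*l2)) \<cdot>\<^sub>v v"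
    by (intro eq_vecI) (auto simp: v_def partial_transpose_A_def)
  moreover have "v \<noteq> 0\<^sub>v 6"
  proof
    assume "v = 0\<^sub>v 6"
    hence "v $ 3 = 0\<^sub>v 6 $ 4" by simp
    thus False by (simp add: v_def)
  qed
  ultimately show ?thesis unfolding eigenvalue_def eigenvector_def
    by (intro exI[of _ v]) (auto simp: v_def partial_transpose_A_def)
qed


lemma npn:
  assumes M: "M \<in> carrier_mat n n" and d: "0 \<le> d"
    and ev: "eigenvalue M (complex_of_real (-d))"
    and low: "\<And>x v. x < -d \<Longrightarrow> v \<in> carrier_vec n \<Longrightarrow> M *\<^sub>v v = complex_of_real x \<cdot>\<^sub>v v \<Longrightarrow> v = 0\<^sub>v n"
  shows "neg_part_norm M = d"
proof -
  let ?A = "{- x | x. eigenvalue M (complex_of_real x)}"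
  have "coeff (char_poly M) n = 1" using degree_monic_char_poly[OF M] by simp
  hence nz: "char_poly M \<noteq> 0" by auto
  have "{x. eigenvalue M (complex_of_real x)} \<subseteq> Re ` {z. poly (char_poly M) z = 0}"
  proof
    fix x assume "x \<in> {x. eigenvalue M (complex_of_real x)}"
    hence "poly (char_poly M) (complex_of_real x) = 0" using eigenvalue_root_char_poly[OF M] by simp
    thus "x \<in> Re ` {z. poly (char_poly M) z = 0}" by (intro image_eqI[of _ _ "complex_of_real x"]) auto
  qed
  hence "finite {x. eigenvalue M (complex_of_real x)}"
    using poly_roots_finite[OF nz] finite_subset by blast
  hence "finite (uminus ` {x. eigenvalue M (complex_of_real x)})" by simp
  moreover have "?A = uminus ` {x. eigenvalue M (complex_of_real x)}" by auto
  ultimately have fin: "finite ?A" by simp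
  have le: "\<forall>y \<in> ?A. y \<le> d"
  proof
    fix y assume "y \<in> ?A"
    then obtain x where y: "y = -x" and e: "eigenvalue M (complex_of_real x)" by auto
    then obtain v where "eigenvector M v (complex_of_real x)" unfolding eigenvalue_def by auto
    hence v: "v \<in> carrier_vec n" "v \<noteq> 0\<^sub>v n" "M *\<^sub>v v = complex_of_real x \<cdot>\<^sub>v v"
      unfolding eigenvector_def using M by auto
    show "y \<le> d"
    proof (rule ccontr)
      assume "\<not> y \<le> d"
      hence "x < -d" using y by simp
      thus False using low v by blast
    qed
  qed
  have "d = - (-d) \<and> eigenvalue M (complex_of_real (-d))" using ev by simp
  hence "d \<in> ?A" by blast
  hence "Max ({0} \<union> ?A) = d" using fin le d by (intro Max_eqI) auto
  thus ?thesis unfolding neg_part_norm_def .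
qed

lemma density_pure:
  fixes l0 l1 l2 :: real
  assumes "l0\<^sup>2 + l1\<^sup>2 + l2\<^sup>2 = 1"
  shows "density_matrix 12 (pure_state (Omega_tilde l0 l1 l2))"
proof -
  let ?p = "Omega_tilde l0 l1 l2"
  have dim: "dim_vec ?p = 12" by (simp add: Omega_tilde_def)
  have psd: "0 \<le> Re (\<Sum>i<12. \<Sum>j<12. cnj (w $ i) * pure_state ?p $$ (i, j) * w $ j)" for w :: "complex vec"
  proof -
    define z where "z = (\<Sum>i<12. cnj (w $ i) * ?p $ i)"
    have "(\<Sum>i<12. \<Sum>j<12. cnj (w $ i) * pure_state ?p $$ (i, j) * w $ j)
        = (\<Sum>i<12. \<Sum>j<12. (cnj (w $ i) * ?p $ i) * (cnj (?p $ j) * w $ j))"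
      by (intro sum.cong refl) (simp add: pure_state_def dim mult.assoc mult.left_commute)
    also have "\<dots> = z * (\<Sum>j<12. cnj (?p $ j) * w $ j)"
      unfolding z_def by (simp add: sum_product)
    also have "(\<Sum>j<12. cnj (?p $ j) * w $ j) = cnj z"
      unfolding z_def by (simp add: mult.commute)
    finally have "(\<Sum>i<12. \<Sum>j<12. cnj (w $ i) * pure_state ?p $$ (i, j) * w $ j) = z * cnj z" .
    thus ?thesis by (simp add: complex_mult_cnj)
  qed
  have tr: "(\<Sum>i<12. pure_state ?p $$ (i, i)) = 1"
  proof -
    have "(\<Sum>i<12. pure_state ?p $$ (i, i)) = (\<Sum>i\<in>{0..<12}. pure_state ?p $$ (i, i))"
      by (simp add: atLeast0LessThan)
    also have "\<dots> = complex_of_real (l0\<^sup>2 + l1\<^sup>2 + l2\<^sup>2)"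
      by (simp add: sum12 pure_state_def Omega_tilde_def power2_eq_square)
    finally show ?thesis using assms by simp
  qed
  show ?thesis unfolding density_matrix_def
    using psd tr by (auto simp: pure_state_def dim)
qed

theorem mainTheorem5:
  shows "\<not> monogamous log_partial_negativity \<and>
    (\<forall>l0 l1 l2 :: real. l0 \<ge> l1 \<and> l1 \<ge> l2 \<and> l2 > 0 \<and> l0\<^sup>2 + l1\<^sup>2 + l2\<^sup>2 = 1 \<longrightarrow>
      (let \<rho> = pure_state (Omega_tilde l0 l1 l2) in
        log_partial_negativity 3 4 \<rho> = log 2 (1 + l0 * l1) \<and>
        log_partial_negativity 3 2 (reduce_AB 3 2 2 \<rho>) = log 2 (1 + l0 * l1) \<and>
        log_partial_negativity 3 2 (reduce_AC 3 2 2 \<rho>) = log 2 (1 + l1 * l2) \<and>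
        log_partial_negativity 3 2 (reduce_AC 3 2 2 \<rho>) > 0))"
proof -
  have B: "log_partial_negativity 3 4 (pure_state (Omega_tilde l0 l1 l2)) = log 2 (1 + l0 * l1) \<and>
        log_partial_negativity 3 2 (reduce_AB 3 2 2 (pure_state (Omega_tilde l0 l1 l2))) = log 2 (1 + l0 * l1) \<and>
        log_partial_negativity 3 2 (reduce_AC 3 2 2 (pure_state (Omega_tilde l0 l1 l2))) = log 2 (1 + l1 * l2) \<and>
        log_partial_negativity 3 2 (reduce_AC 3 2 2 (pure_state (Omega_tilde l0 l1 l2))) > 0"
    if l: "l0 \<ge> l1" "l1 \<ge> l2" "l2 > 0" for l0 l1 l2 :: real
  proof -
    have p: "0 \<le> l0*l1" "0 < l1*l2" using l by simp_all
    have n1: "partial_negativity 3 4 (pure_state (Omega_tilde l0 l1 l2)) = l0*l1"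
      unfolding partial_negativity_def
      by (rule npn[where n=12, OF _ p(1) PT34_ev]) (simp add: partial_transpose_A_def, blast intro: PT34_low[OF _ _ l])
    have n2: "partial_negativity 3 2 (reduce_AB 3 2 2 (pure_state (Omega_tilde l0 l1 l2))) = l0*l1"
      unfolding partial_negativity_def
      by (rule npn[where n=6, OF _ p(1) AB_ev]) (simp add: partial_transpose_A_def, blast intro: AB_low[OF _ _ l])
    have n3: "partial_negativity 3 2 (reduce_AC 3 2 2 (pure_state (Omega_tilde l0 l1 l2))) = l1*l2"
      unfolding partial_negativity_def
      by (rule npn[where n=6, OF _ less_imp_le[OF p(2)] AC_ev]) (simp add: partial_transpose_A_def, blast intro: AC_low[OF _ _ l])
    have "0 < log 2 (1 + l1*l2)" using p by simp
    thus ?thesis unfolding log_partial_negativity_def n1 n2 n3 by (simp add: add.commute)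
  qed
  define s :: real where "s = 1 / sqrt 3"
  have s: "s > 0" "s\<^sup>2 + s\<^sup>2 + s\<^sup>2 = 1" unfolding s_def by (simp_all add: power_divide)
  have "\<not> monogamous log_partial_negativity"
  proof
    assume m: "monogamous log_partial_negativity"
    let ?r = "pure_state (Omega_tilde s s s)"
    have "density_matrix (3*2*2) ?r" using density_pure[OF s(2)] by simp
    moreover have "log_partial_negativity 3 (2*2) ?r = log_partial_negativity 3 2 (reduce_AB 3 2 2 ?r)"
      using B[of s s s] s by simp
    ultimately have z: "log_partial_negativity 3 2 (reduce_AC 3 2 2 ?r) = 0"
      using m unfolding monogamous_def by blast
    have "0 < log_partial_negativity 3 2 (reduce_AC 3 2 2 ?r)" using B[of s s s] s by blast
    thus False using z by simp
  qed
  moreover have "\<forall>l0 l1 l2 :: real. l0 \<ge> l1 \<and> l1 \<ge> l2 \<and> l2 > 0 \<and> l0\<^sup>2 + l1\<^sup>2 + l2\<^sup>2 = 1 \<longrightarrow>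
      (let \<rho> = pure_state (Omega_tilde l0 l1 l2) in
        log_partial_negativity 3 4 \<rho> = log 2 (1 + l0 * l1) \<and>
        log_partial_negativity 3 2 (reduce_AB 3 2 2 \<rho>) = log 2 (1 + l0 * l1) \<and>
        log_partial_negativity 3 2 (reduce_AC 3 2 2 \<rho>) = log 2 (1 + l1 * l2) \<and>
        log_partial_negativity 3 2 (reduce_AC 3 2 2 \<rho>) > 0)"
    unfolding Let_def using B by blast
  ultimately show ?thesis by blast
qed

end
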